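(* The set of modified ascent sequences equals the set of Cayley permutations avoiding the mesh patterns $\mathfrak{a}$ and $\mathfrak{b}$: $\mathrm{Modasc}=\mathrm{Cay}(\mathfrak{a},\mathfrak{b})$. Consequently $\{\mathfrak{a},\mathfrak{b}\}$ and $\{11,\mathfrak{f}\}$ are Wilf-equivalent over Cayley permutations, i.e. $|\mathrm{Cay}_n(\mathfrak{a},\mathfrak{b})|=|\mathrm{Cay}_n(11,\mathfrak{f})|$ for all $n$, where $\mathrm{Cay}_n(11,\mathfrak{f})$ is the set of Fishburn permutations of length $n$.
   Context: A Cayley permutation of length $n$ is a word $x=x(1)\cdots x(n)$ of positive integers in which every integer from $1$ to $\max(x)$ occurs; $\mathrm{Cay}_n$ is the set of these and $\mathrm{Cay}$ their union. Avoiding the pattern $11$ means having no repeated letter (i.e. being a permutation). Mesh patterns: a Cayley permutation $x$ contains $\mathfrak{a}$ if there are indices $i<j<n$ with $x(j)<x(i)=x(j+1)$. It contains $\mathfrak{b}$ if there is an index $i<n$ with $x(i)>x(i+1)$ and no index $m<i$ with $x(m)=x(i+1)$. $\mathrm{Cay}(\mathfrak{a},\mathfrak{b})$ is the set of Cayley permutations containing neither; $\mathrm{Cay}_n(\cdot)$ restricts to length $n$. Modified ascent sequences: $\mathrm{Modasc}_0=\{\text{empty word}\}$, $\mathrm{Modasc}_1=\{1\}$; for $n\ge2$, $x\in\mathrm{Modasc}_n$ iff there is $v\in\mathrm{Modasc}_{n-1}$ with last letter $b$ such that either $x=va$ with $1\le a\le b$, or $x=\tilde va$ with $b<a\le2+\mathrm{asc}(v)$,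 where $\mathrm{asc}(v)=|\{i:v(i)<v(i+1)\}|$ and $\tilde v$ is $v$ with every entry $c\ge a$ increased by one. $\mathrm{Modasc}=\bigcup_n\mathrm{Modasc}_n$. $\mathfrak{f}$ is the bivincular pattern $(231,\{1\},\{1\})$: a permutation $\pi$ contains it if there are indices $i$ and $k>i+1$ with $\pi(i)<\pi(i+1)$ and $\pi(k)=\pi(i)-1$. Permutations avoiding $\mathfrak{f}$ are the Fishburn permutations. *)

theory Defs
  imports Main
begin

(* Words are nat lists; positions are 0-indexed (x ! 0 is the paper's x(1)). *)

definition maxl :: "nat list \<Rightarrow> nat" where
  "maxl x = foldr max x 0"

definition is_cay :: "nat list \<Rightarrow> bool" where
  "is_cay x \<longleftrightarrow> set x = {1..maxl x}"

definition contains_a :: "nat list \<Rightarrow> bool" where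
  "contains_a x \<longleftrightarrow> (\<exists>i j. i < j \<and> Suc j < length x \<and> x ! j < x ! i \<and> x ! i = x ! Suc j)"

definition contains_b :: "nat list \<Rightarrow> bool" where
  "contains_b x \<longleftrightarrow> (\<exists>i. Suc i < length x \<and> x ! i > x ! Suc i \<and> (\<forall>m<i. x ! m \<noteq> x ! Suc i))"

(* bivincular pattern f = (231,{1},{1}) *)
definition contains_f :: "nat list \<Rightarrow> bool" where
  "contains_f p \<longleftrightarrow> (\<exists>i k. Suc i < k \<and> k < length p \<and> p ! i < p ! Suc i \<and> p ! k + 1 = p ! i)"

definition asc :: "nat list \<Rightarrow> nat" where
  "asc v = card {i. Suc i < length v \<and> v ! i < v ! Suc i}"

inductive modasc :: "nat list \<Rightarrow> bool" where
  empty: "modasc []"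
| one: "modasc [1]"
| app_le: "modasc v \<Longrightarrow> v \<noteq> [] \<Longrightarrow> 1 \<le> a \<Longrightarrow> a \<le> last v \<Longrightarrow> modasc (v @ [a])"
| app_gt: "modasc v \<Longrightarrow> v \<noteq> [] \<Longrightarrow> last v < a \<Longrightarrow> a \<le> 2 + asc v \<Longrightarrow>
           modasc (map (\<lambda>c. if a \<le> c then c + 1 else c) v @ [a])"

end

theory Submission
  imports Defs
begin


definition good :: "nat list \<Rightarrow> bool" where
  "good x \<longleftrightarrow> (\<forall>i. Suc i < length x \<longrightarrow> (x!i < x!Suc i \<longleftrightarrow> x!Suc i \<notin> set (take (Suc i) x)))"

definition incf :: "nat \<Rightarrow> nat \<Rightarrow> nat" where
  "incf a c = (if a \<le> c then c + 1 else c)"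
definition decf :: "nat \<Rightarrow> nat \<Rightarrow> nat" where
  "decf a c = (if a < c then c - 1 else c)"

lemma incf_lam: "(\<lambda>c. if a \<le> c then c + 1 else c) = incf a"
  by (auto simp: incf_def fun_eq_iff)

lemma good_Nil[simp]: "good []" by (simp add: good_def)
lemma good_single[simp]: "good [a]" by (simp add: good_def)

lemma good_snoc: "good (v@[a]) \<longleftrightarrow> good v \<and> (v \<noteq> [] \<longrightarrow> (last v < a \<longleftrightarrow> a \<notin> set v))"
proof
  assume g: "good (v@[a])"
  have "good v" unfolding good_def
  proof (intro allI impI)
    fix i assume i: "Suc i < length v"
    have "(v@[a])!i < (v@[a])!Suc i \<longleftrightarrow> (v@[a])!Suc i \<notin> set (take (Suc i) (v@[a]))"
      using g i by (simp add: good_def)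
    then show "v!i < v!Suc i \<longleftrightarrow> v!Suc i \<notin> set (take (Suc i) v)"
      using i by (simp add: nth_append)
  qed
  moreover have "v \<noteq> [] \<longrightarrow> (last v < a \<longleftrightarrow> a \<notin> set v)"
  proof
    assume "v \<noteq> []"
    then obtain i where i: "length v = Suc i" by (cases v) auto
    have "(v@[a])!i < (v@[a])!Suc i \<longleftrightarrow> (v@[a])!Suc i \<notin> set (take (Suc i) (v@[a]))"
      using g i by (simp add: good_def)
    then show "last v < a \<longleftrightarrow> a \<notin> set v"
      using i \<open>v \<noteq> []\<close> by (simp add: nth_append last_conv_nth)
  qed
  ultimately show "good v \<and> (v \<noteq> [] \<longrightarrow> (last v < a \<longleftrightarrow> a \<notin> set v))" by blast
next
  assume h: "good v \<and> (v \<noteq> [] \<longrightarrow> (last v < a \<longleftrightarrow> a \<notin> set v))"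
  show "good (v@[a])" unfolding good_def
  proof (intro allI impI)
    fix i assume i: "Suc i < length (v@[a])"
    show "(v@[a])!i < (v@[a])!Suc i \<longleftrightarrow> (v@[a])!Suc i \<notin> set (take (Suc i) (v@[a]))"
    proof (cases "Suc i < length v")
      case True
      then show ?thesis using h by (simp add: nth_append good_def)
    next
      case False
      then have e: "length v = Suc i" using i by simp
      then have "v \<noteq> []" by auto
      then show ?thesis using h e by (simp add: nth_append last_conv_nth)
    qed
  qed
qed

lemma in_take_conv: "y \<in> set (take n x) \<longleftrightarrow> (\<exists>m<n. m < length x \<and> x!m = y)"
  by (auto simp: in_set_conv_nth)

lemma good_iff: "good x \<longleftrightarrow> \<not> contains_a x \<and> \<not> contains_b x"
proof
  assume g: "good x"
  have na: "\<not> contains_a x"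
  proof
    assume "contains_a x"
    then obtain i j where "i < j" "Suc j < length x" "x ! j < x ! i" "x ! i = x ! Suc j"
      unfolding contains_a_def by blast
    moreover have "x!j < x!Suc j \<longleftrightarrow> x!Suc j \<notin> set (take (Suc j) x)"
      using g calculation by (simp add: good_def)
    ultimately show False by (force simp: in_take_conv)
  qed
  have nb: "\<not> contains_b x"
  proof
    assume "contains_b x"
    then obtain i where i: "Suc i < length x" "x ! i > x ! Suc i" "\<forall>m<i. x ! m \<noteq> x ! Suc i"
      unfolding contains_b_def by blast
    moreover have "x!i < x!Suc i \<longleftrightarrow> x!Suc i \<notin> set (take (Suc i) x)"
      using g calculation by (simp add: good_def)
    ultimately obtain m where "m < Suc i" "x!m = x!Suc i" by (auto simp: in_take_conv)
    then show False using i by (cases "m = i") auto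
  qed
  show "\<not> contains_a x \<and> \<not> contains_b x" using na nb by blast
next
  assume h: "\<not> contains_a x \<and> \<not> contains_b x"
  show "good x" unfolding good_def
  proof (intro allI impI)
    fix i assume i: "Suc i < length x"
    show "x!i < x!Suc i \<longleftrightarrow> x!Suc i \<notin> set (take (Suc i) x)"
    proof
      assume lt: "x!i < x!Suc i"
      show "x!Suc i \<notin> set (take (Suc i) x)"
      proof
        assume "x!Suc i \<in> set (take (Suc i) x)"
        then obtain m where m: "m < Suc i" "x!m = x!Suc i" by (auto simp: in_take_conv)
        show False
        proof (cases "m = i")
          case True then show ?thesis using m lt by simp
        next
          case False
          then have "contains_a x" unfolding contains_a_def using m lt i
            by (intro exI[of _ m] exI[of _ i]) auto
          then show ?thesis using h by blast
        qed
      qed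
    next
      assume nin: "x!Suc i \<notin> set (take (Suc i) x)"
      show "x!i < x!Suc i"
      proof (rule ccontr)
        assume "\<not> x!i < x!Suc i"
        moreover have "x!i \<noteq> x!Suc i" using nin i by (force simp: in_take_conv)
        ultimately have gt: "x!i > x!Suc i" by simp
        have "\<not> (\<forall>m<i. x ! m \<noteq> x ! Suc i)" using h gt i unfolding contains_b_def by blast
        then obtain m where "m < i" "x!m = x!Suc i" by blast
        then show False using nin i by (force simp: in_take_conv)
      qed
    qed
  qed
qed

lemma maxl_eq: "maxl x = Max (insert 0 (set x))"
proof (induction x)
  case Nil then show ?case by (simp add: maxl_def)
next
  case (Cons a x)
  have "maxl (a#x) = max a (maxl x)" by (simp add: maxl_def)
  also have "\<dots> = max a (Max (insert 0 (set x)))" using Cons by simp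
  also have "\<dots> = Max (insert a (insert 0 (set x)))" by (simp add: Max_insert)
  also have "\<dots> = Max (insert 0 (set (a#x)))" by (simp add: insert_commute)
  finally show ?case .
qed

lemma asc_snoc: "asc (v@[a]) = asc v + (if v \<noteq> [] \<and> last v < a then 1 else 0)"
proof -
  have "{i. Suc i < length (v@[a]) \<and> (v@[a]) ! i < (v@[a]) ! Suc i} =
        {i. Suc i < length v \<and> v ! i < v ! Suc i} \<union>
        (if v \<noteq> [] \<and> last v < a then {length v - 1} else {})" (is "?L = ?R \<union> ?E")
  proof (rule set_eqI)
    fix i
    show "i \<in> ?L \<longleftrightarrow> i \<in> ?R \<union> ?E"
      by (cases "Suc i < length v"; cases v rule: rev_cases) (auto simp: nth_append)
  qed
  moreover have "finite ?R" by (rule finite_subset[of _ "{..<length v}"]) auto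
  moreover have "?R \<inter> ?E = {}" by auto
  ultimately show ?thesis unfolding asc_def by (simp add: card_Un_disjoint)
qed

lemma asc_map:
  assumes "\<And>c d. c \<in> set v \<Longrightarrow> d \<in> set v \<Longrightarrow> f c < f d \<longleftrightarrow> c < d"
  shows "asc (map f v) = asc v"
proof -
  have "{i. Suc i < length (map f v) \<and> (map f v) ! i < (map f v) ! Suc i} =
        {i. Suc i < length v \<and> v ! i < v ! Suc i}"
    using assms by auto
  then show ?thesis unfolding asc_def by simp
qed

lemma good_map:
  assumes "\<And>c d. c \<in> set v \<Longrightarrow> d \<in> set v \<Longrightarrow> f c < f d \<longleftrightarrow> c < d"
  shows "good (map f v) \<longleftrightarrow> good v"
proof -
  have inj: "\<And>c d. c \<in> set v \<Longrightarrow> d \<in> set v \<Longrightarrow> f c = f d \<longleftrightarrow> c = d"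
    using assms by (metis linorder_neqE_nat less_irrefl)
  have "\<And>i. Suc i < length v \<Longrightarrow> (f (v!Suc i) \<in> f ` set (take (Suc i) v)) = (v!Suc i \<in> set (take (Suc i) v))"
  proof -
    fix i assume i: "Suc i < length v"
    have "set (take (Suc i) v) \<subseteq> set v" by (rule set_take_subset)
    then show "(f (v!Suc i) \<in> f ` set (take (Suc i) v)) = (v!Suc i \<in> set (take (Suc i) v))"
      using inj i by (auto)
  qed
  then show ?thesis using assms unfolding good_def by (auto simp: take_map)
qed

lemma card_good: "good x \<Longrightarrow> x \<noteq> [] \<Longrightarrow> card (set x) = asc x + 1"
proof (induction x rule: rev_induct)
  case Nil then show ?case by simp
next
  case (snoc a v)
  show ?case
  proof (cases "v = []")
    case True then show ?thesis by (simp add: asc_def)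
  next
    case False
    have gv: "good v" and e: "last v < a \<longleftrightarrow> a \<notin> set v" using snoc.prems False good_snoc by auto
    then show ?thesis using snoc.IH[OF gv False] False by (auto simp: asc_snoc insert_absorb)
  qed
qed

lemma cay_card: "is_cay x \<Longrightarrow> card (set x) = maxl x"
  by (simp add: is_cay_def)

lemma incf_mono: "incf a c < incf a d \<longleftrightarrow> c < d"
  by (auto simp: incf_def)

lemma modasc_imp: "modasc x \<Longrightarrow> is_cay x \<and> good x"
proof (induction rule: modasc.induct)
  case empty then show ?case by (simp add: is_cay_def maxl_def)
next
  case one then show ?case by (simp add: is_cay_def maxl_def)
next
  case (app_le v a)
  have "a \<in> set v"
  proof -
    have "last v \<in> set v" using app_le by simp
    then have "last v \<le> maxl v" unfolding maxl_eq by simp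
    then show ?thesis using app_le by (auto simp: is_cay_def)
  qed
  then have "set (v@[a]) = set v" by auto
  moreover have "maxl (v@[a]) = maxl v" unfolding maxl_eq using \<open>a \<in> set v\<close>
    by (simp add: insert_absorb)
  ultimately show ?case using app_le \<open>a \<in> set v\<close> by (simp add: is_cay_def good_snoc)
next
  case (app_gt v a)
  let ?w = "map (incf a) v"
  have cv: "is_cay v" and gv: "good v" using app_gt by auto
  have M: "maxl v = asc v + 1" using card_good[OF gv app_gt(2)] cay_card[OF cv] by simp
  have sv: "set v = {1..maxl v}" using cv by (simp add: is_cay_def)
  have "a \<ge> 1" using app_gt by simp
  have sw: "set (?w @ [a]) = {1..maxl v + 1}"
  proof -
    have "set (?w @ [a]) = insert a (incf a ` {1..maxl v})" using sv by simp
    also have "\<dots> = {1..maxl v + 1}"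
    proof (rule set_eqI)
      fix c
      show "c \<in> insert a (incf a ` {1..maxl v}) \<longleftrightarrow> c \<in> {1..maxl v + 1}"
      proof
        assume "c \<in> insert a (incf a ` {1..maxl v})"
        then show "c \<in> {1..maxl v + 1}" using app_gt M by (auto simp: incf_def)
      next
        assume c: "c \<in> {1..maxl v + 1}"
        show "c \<in> insert a (incf a ` {1..maxl v})"
        proof (cases "c < a")
          case True then have "c = incf a c" "c \<in> {1..maxl v}" using c app_gt M by (auto simp: incf_def)
          then show ?thesis by blast
        next
          case False
          show ?thesis
          proof (cases "c = a")
            case False
            then have "c = incf a (c - 1)" "c - 1 \<in> {1..maxl v}" using c \<open>\<not> c < a\<close> \<open>a \<ge> 1\<close>
              by (auto simp: incf_def)
            then show ?thesis by blast
          qed simp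
        qed
      qed
    qed
    finally show ?thesis .
  qed
  have "maxl (?w @ [a]) = maxl v + 1"
  proof -
    have "maxl (?w @ [a]) = Max (insert 0 (set (?w @ [a])))" by (rule maxl_eq)
    also have "\<dots> = Max (insert 0 {1..maxl v + 1})" by (simp only: sw)
    also have "\<dots> = maxl v + 1" by (simp add: Max_insert, rule Max_eqI, auto)
    finally show ?thesis .
  qed
  then have c1: "is_cay (?w @ [a])" using sw by (simp add: is_cay_def)
  have "good ?w" using good_map[of v "incf a"] gv incf_mono by blast
  moreover have "a \<notin> set ?w" by (auto simp: incf_def)
  moreover have "last ?w < a" using app_gt by (simp add: last_map incf_def)
  ultimately have "good (?w @ [a])" using good_snoc app_gt by auto
  then show ?case using c1 by (simp add: incf_lam)
qed

lemma cay_maxl_ge: "is_cay x \<Longrightarrow> c \<in> set x \<Longrightarrow> 1 \<le> c \<and> c \<le> maxl x"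
  unfolding is_cay_def by (metis atLeastAtMost_iff)

lemma cay_in: "is_cay x \<Longrightarrow> 1 \<le> c \<Longrightarrow> c \<le> maxl x \<Longrightarrow> c \<in> set x"
  unfolding is_cay_def by (metis atLeastAtMost_iff)

lemma maxl_of_set: "set x = {1..k} \<Longrightarrow> maxl x = k"
proof -
  assume h: "set x = {1..k}"
  have "maxl x = Max (insert 0 {1..k})" unfolding maxl_eq h ..
  also have "\<dots> = k" by (rule Max_eqI) auto
  finally show ?thesis .
qed

lemma parent_props:
  assumes c: "is_cay (v@[a])" and g: "good (v@[a])" and ne: "v \<noteq> []"
  defines "w \<equiv> (if a \<in> set v then v else map (decf a) v)"
  shows "is_cay w \<and> good w \<and> length w = length v \<and>
         (a \<in> set v \<longrightarrow> 1 \<le> a \<and> a \<le> last v) \<and>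
         (a \<notin> set v \<longrightarrow> last w < a \<and> a \<le> 2 + asc w \<and> map (incf a) w = v)"
proof (cases "a \<in> set v")
  case True
  have gv: "good v" and e: "last v < a \<longleftrightarrow> a \<notin> set v" using g ne good_snoc by auto
  have "set v = set (v@[a])" using True by auto
  moreover have "maxl v = maxl (v@[a])" unfolding maxl_eq using True by (simp add: insert_absorb)
  ultimately have "is_cay v" using c by (simp add: is_cay_def)
  moreover have "1 \<le> a" using cay_maxl_ge[OF c] by simp
  moreover have "w = v" using True w_def by simp
  moreover have "a \<le> last v" using e True by linarith
  ultimately show ?thesis using True gv by simp
next
  case False
  have gv: "good v" and e: "last v < a" using g ne good_snoc False by auto
  define M where "M = maxl (v@[a])"
  have sx: "set (v@[a]) = {1..M}" using c by (simp add: is_cay_def M_def)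
  have sv: "set v = {1..M} - {a}" using sx False by auto
  have a1: "1 \<le> a" "a \<le> M" using sx by auto
  have mono: "\<And>c d. c \<in> set v \<Longrightarrow> d \<in> set v \<Longrightarrow> decf a c < decf a d \<longleftrightarrow> c < d"
  proof -
    fix c d assume "c \<in> set v" "d \<in> set v"
    then have "c \<noteq> a" "d \<noteq> a" using False by blast+
    then show "decf a c < decf a d \<longleftrightarrow> c < d" unfolding decf_def
      by (cases "a < c"; cases "a < d") auto
  qed
  have wd: "w = map (decf a) v" using False w_def by simp
  have sw: "set w = {1..M-1}"
  proof (rule set_eqI)
    fix c
    show "c \<in> set w \<longleftrightarrow> c \<in> {1..M-1}"
    proof
      assume "c \<in> set w"
      then obtain d where d: "d \<in> set v" "c = decf a d" using wd by auto
      then have "d \<in> {1..M}" "d \<noteq> a" using sv by auto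
      then show "c \<in> {1..M-1}" using d(2) a1 by (cases "a < d") (auto simp: decf_def)
    next
      assume cc: "c \<in> {1..M-1}"
      show "c \<in> set w"
      proof (cases "c < a")
        case True
        have "c \<in> {1..M} - {a}" using cc True by auto
        then have "c \<in> set v" unfolding sv .
        moreover have "decf a c = c" using True by (simp add: decf_def)
        ultimately show ?thesis using wd by force
      next
        case False
        have "Suc c \<in> {1..M} - {a}" using cc False a1 by auto
        then have "Suc c \<in> set v" unfolding sv .
        moreover have "decf a (Suc c) = c" using False by (simp add: decf_def)
        ultimately show ?thesis using wd by force
      qed
    qed
  qed
  have "is_cay w" using sw maxl_of_set[OF sw] by (simp add: is_cay_def)
  moreover have "good w" using wd good_map[of v "decf a"] mono gv by blast
  moreover have "last w < a" using wd e ne by (simp add: last_map decf_def)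
  moreover have "asc w = asc v" using wd asc_map[of v "decf a"] mono by blast
  moreover have "card (set (v@[a])) = asc v + 2"
    using card_good[OF g] ne e by (simp add: asc_snoc)
  moreover have "card (set (v@[a])) = M" using sx by simp
  moreover have "map (incf a) w = v"
  proof -
    have "\<And>c. c \<in> set v \<Longrightarrow> incf a (decf a c) = c" using False
      by (auto simp: incf_def decf_def)
    then show ?thesis using wd by (simp add: map_idI)
  qed
  ultimately have "is_cay w \<and> good w \<and> length w = length v \<and>
      (last w < a \<and> a \<le> 2 + asc w \<and> map (incf a) w = v)" using a1 wd
    by simp
  then show ?thesis using False by blast
qed

lemma imp_modasc: "is_cay x \<Longrightarrow> good x \<Longrightarrow> modasc x"
proof (induction "length x" arbitrary: x rule: less_induct)
  case less
  show ?case
  proof (cases x rule: rev_cases)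
    case Nil then show ?thesis by (simp add: modasc.empty)
  next
    case (snoc v a)
    show ?thesis
    proof (cases "v = []")
      case True
      then have e: "{a} = {1..a}" using less.prems snoc by (simp add: is_cay_def maxl_def)
      then have "a \<in> {1..a}" by blast
      then have "1 \<in> {1..a}" by simp
      then have "1 \<in> {a}" by (simp only: e)
      then have "a = 1" by simp
      then show ?thesis using True snoc modasc.one by simp
    next
      case False
      define w where "w = (if a \<in> set v then v else map (decf a) v)"
      have P: "is_cay w \<and> good w \<and> length w = length v \<and>
         (a \<in> set v \<longrightarrow> 1 \<le> a \<and> a \<le> last v) \<and>
         (a \<notin> set v \<longrightarrow> last w < a \<and> a \<le> 2 + asc w \<and> map (incf a) w = v)"
        using parent_props[of v a] less.prems snoc False w_def by blast
      have lw: "length w < length x" using P snoc by simp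
      have mw: "modasc w" using less.hyps[OF lw] P by blast
      have wne: "w \<noteq> []" using P False by (metis length_0_conv)
      show ?thesis
      proof (cases "a \<in> set v")
        case True
        then have "w = v" "1 \<le> a" "a \<le> last v" using P w_def by simp_all
        then show ?thesis using modasc.app_le[of v a] mw snoc False by simp
      next
        case nin: False
        have q: "last w < a" "a \<le> 2 + asc w" "map (incf a) w = v" using P nin by blast+
        have "modasc (map (\<lambda>c. if a \<le> c then c + 1 else c) w @ [a])"
          using modasc.app_gt[OF mw wne q(1) q(2)] .
        then show ?thesis using q(3) snoc by (simp only: incf_lam)
      qed
    qed
  qed
qed

theorem part1: "{x. modasc x} = {x. is_cay x \<and> \<not> contains_a x \<and> \<not> contains_b x}"
  using modasc_imp imp_modasc good_iff by blast



definition K :: "nat \<times> nat \<Rightarrow> (nat \<times> nat) set" where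
  "K pm = {L. (snd L = snd pm \<and> 1 \<le> fst L \<and> fst L \<le> fst pm) \<or>
              (snd L = Suc (snd pm) \<and> fst pm < fst L \<and> fst L \<le> snd pm)}"

lemma tree_step:
  assumes par: "\<And>x. x \<in> A (Suc n) \<Longrightarrow> par x \<in> A n"
  and fib: "\<And>y. y \<in> A n \<Longrightarrow> bij_betw lab {x \<in> A (Suc n). par x = y} (K (lab y))"
  shows "card {x \<in> A (Suc n). lab x = L} = card {y \<in> A n. L \<in> K (lab y)}"
proof -
  have "bij_betw par {x \<in> A (Suc n). lab x = L} {y \<in> A n. L \<in> K (lab y)}"
    unfolding bij_betw_def
  proof
    show "inj_on par {x \<in> A (Suc n). lab x = L}"
    proof (rule inj_onI)
      fix x1 x2 assume x1: "x1 \<in> {x \<in> A (Suc n). lab x = L}" and x2: "x2 \<in> {x \<in> A (Suc n). lab x = L}"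
        and e: "par x1 = par x2"
      let ?y = "par x1"
      have "?y \<in> A n" using par x1 by blast
      then have "inj_on lab {x \<in> A (Suc n). par x = ?y}" using fib bij_betw_imp_inj_on by blast
      then show "x1 = x2" using x1 x2 e by (auto dest: inj_onD)
    qed
    show "par ` {x \<in> A (Suc n). lab x = L} = {y \<in> A n. L \<in> K (lab y)}"
    proof
      show "par ` {x \<in> A (Suc n). lab x = L} \<subseteq> {y \<in> A n. L \<in> K (lab y)}"
      proof
        fix y assume "y \<in> par ` {x \<in> A (Suc n). lab x = L}"
        then obtain x where x: "x \<in> A (Suc n)" "lab x = L" "y = par x" by blast
        then have yA: "y \<in> A n" using par by blast
        have "lab ` {x \<in> A (Suc n). par x = y} = K (lab y)" using fib[OF yA] by (rule bij_betw_imp_surj_on)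
        then have "L \<in> K (lab y)" using x by blast
        then show "y \<in> {y \<in> A n. L \<in> K (lab y)}" using yA by blast
      qed
    next
      show "{y \<in> A n. L \<in> K (lab y)} \<subseteq> par ` {x \<in> A (Suc n). lab x = L}"
      proof
        fix y assume y: "y \<in> {y \<in> A n. L \<in> K (lab y)}"
        have "lab ` {x \<in> A (Suc n). par x = y} = K (lab y)" using y by (intro bij_betw_imp_surj_on fib) blast
        then obtain x where "x \<in> A (Suc n)" "par x = y" "lab x = L" using y by force
        then show "y \<in> par ` {x \<in> A (Suc n). lab x = L}" by blast
      qed
    qed
  qed
  then show ?thesis by (rule bij_betw_same_card)
qed

lemma card_filter_sum:
  assumes "finite S" "finite T" "f ` S \<subseteq> T"
  shows "card {x \<in> S. P (f x)} = (\<Sum>L\<in>T. if P L then card {x \<in> S. f x = L} else 0)"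
proof -
  have "{x \<in> S. P (f x)} = (\<Union>L\<in>{L\<in>T. P L}. {x \<in> S. f x = L})" using assms by auto
  moreover have "card (\<Union>L\<in>{L\<in>T. P L}. {x \<in> S. f x = L}) = (\<Sum>L\<in>{L\<in>T. P L}. card {x \<in> S. f x = L})"
    by (rule card_UN_disjoint) (use assms in auto)
  ultimately have "card {x \<in> S. P (f x)} = (\<Sum>L\<in>{L\<in>T. P L}. card {x \<in> S. f x = L})"
    by simp
  also have "\<dots> = (\<Sum>L\<in>T. if P L then card {x \<in> S. f x = L} else 0)"
    using assms by (simp add: sum.inter_filter)
  finally show ?thesis .
qed

lemma same_count:
  fixes A :: "nat \<Rightarrow> 'a set" and B :: "nat \<Rightarrow> 'b set"
  assumes finA: "\<And>n. finite (A n)" and finB: "\<And>n. finite (B n)"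
  and stepA: "\<And>n L. n \<ge> 1 \<Longrightarrow> card {x \<in> A (Suc n). labA x = L} = card {y \<in> A n. L \<in> K (labA y)}"
  and stepB: "\<And>n L. n \<ge> 1 \<Longrightarrow> card {x \<in> B (Suc n). labB x = L} = card {y \<in> B n. L \<in> K (labB y)}"
  and base: "\<And>L. card {x \<in> A 1. labA x = L} = card {x \<in> B 1. labB x = L}"
  and n: "n \<ge> 1"
  shows "card (A n) = card (B n)"
proof -
  have gen: "\<And>P. (\<forall>L. card {x \<in> A n. labA x = L} = card {x \<in> B n. labB x = L}) \<Longrightarrow>
     card {x \<in> A n. P (labA x)} = card {x \<in> B n. P (labB x)}" for n
  proof -
    fix P n
    assume h: "\<forall>L. card {x \<in> A n. labA x = L} = card {x \<in> B n. labB x = L}"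
    let ?T = "labA ` A n \<union> labB ` B n"
    have "card {x \<in> A n. P (labA x)} = (\<Sum>L\<in>?T. if P L then card {x \<in> A n. labA x = L} else 0)"
      using finA finB by (intro card_filter_sum) auto
    also have "\<dots> = (\<Sum>L\<in>?T. if P L then card {x \<in> B n. labB x = L} else 0)"
      by (rule sum.cong[OF refl]) (simp only: h[rule_format])
    also have "\<dots> = card {x \<in> B n. P (labB x)}"
      using finA finB by (intro card_filter_sum[symmetric]) auto
    finally show "card {x \<in> A n. P (labA x)} = card {x \<in> B n. P (labB x)}" .
  qed
  have "\<forall>L. card {x \<in> A n. labA x = L} = card {x \<in> B n. labB x = L}" using n
  proof (induction n rule: nat_induct_at_least)
    case base then show ?case using assms(5) by simp
  next
    case (Suc n)
    show ?case
    proof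
      fix L
      show "card {x \<in> A (Suc n). labA x = L} = card {x \<in> B (Suc n). labB x = L}"
        using stepA[OF Suc.hyps(1)] stepB[OF Suc.hyps(1)] gen[OF Suc.IH, of "\<lambda>L0. L \<in> K L0"] by simp
    qed
  qed
  from gen[OF this, of "\<lambda>_. True"] show ?thesis by simp
qed

lemma rank_bij:
  fixes S :: "nat set"
  assumes fin: "finite S"
  defines "c \<equiv> (\<lambda>s. card {s' \<in> S. s' \<le> s})"
  shows "bij_betw (\<lambda>s. (c s, if t < s then Suc (card S) else card S)) S (K (c t, card S))"
proof -
  let ?m = "card S"
  have cmono: "\<And>s1 s2. s1 \<le> s2 \<Longrightarrow> c s1 \<le> c s2"
    unfolding c_def using fin by (intro card_mono) auto
  have cstrict: "\<And>s1 s2. s1 < s2 \<Longrightarrow> s2 \<in> S \<Longrightarrow> c s1 < c s2"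
  proof -
    fix s1 s2 :: nat assume a: "s1 < s2" "s2 \<in> S"
    have "s2 \<in> {s' \<in> S. s' \<le> s2}" "s2 \<notin> {s' \<in> S. s' \<le> s1}" using a by auto
    moreover have "{s' \<in> S. s' \<le> s1} \<subseteq> {s' \<in> S. s' \<le> s2}" using a by auto
    ultimately have "{s' \<in> S. s' \<le> s1} \<subset> {s' \<in> S. s' \<le> s2}" by blast
    then show "c s1 < c s2" unfolding c_def using fin by (intro psubset_card_mono) auto
  qed
  have cle: "\<And>s. c s \<le> ?m" unfolding c_def using fin by (intro card_mono) auto
  have cge: "\<And>s. s \<in> S \<Longrightarrow> 1 \<le> c s"
  proof -
    fix s assume "s \<in> S"
    then have "{s' \<in> S. s' \<le> s} \<noteq> {}" by auto
    moreover have "finite {s' \<in> S. s' \<le> s}" using fin by auto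
    ultimately show "1 \<le> c s" unfolding c_def by (simp add: Suc_le_eq card_gt_0_iff)
  qed
  have cinj: "inj_on c S"
  proof (rule inj_onI)
    fix x y assume "x \<in> S" "y \<in> S" "c x = c y"
    then show "x = y" using cstrict by (metis less_irrefl linorder_neqE_nat)
  qed
  have cimg: "c ` S = {1..?m}"
  proof (rule card_subset_eq)
    show "finite {1..?m}" by simp
    show "c ` S \<subseteq> {1..?m}" using cle cge by auto
    show "card (c ` S) = card {1..?m}" using card_image[OF cinj] by simp
  qed
  show ?thesis unfolding bij_betw_def
  proof
    show "inj_on (\<lambda>s. (c s, if t < s then Suc ?m else ?m)) S"
      using cinj by (auto simp: inj_on_def)
    show "(\<lambda>s. (c s, if t < s then Suc ?m else ?m)) ` S = K (c t, ?m)"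
    proof
      show "(\<lambda>s. (c s, if t < s then Suc ?m else ?m)) ` S \<subseteq> K (c t, ?m)"
      proof
        fix L assume "L \<in> (\<lambda>s. (c s, if t < s then Suc ?m else ?m)) ` S"
        then obtain s where s: "s \<in> S" "L = (c s, if t < s then Suc ?m else ?m)" by blast
        show "L \<in> K (c t, ?m)"
        proof (cases "t < s")
          case True
          then show ?thesis using s cstrict[OF True s(1)] cle by (simp add: K_def)
        next
          case False
          then show ?thesis using s cmono[of s t] cge by (simp add: K_def)
        qed
      qed
      show "K (c t, ?m) \<subseteq> (\<lambda>s. (c s, if t < s then Suc ?m else ?m)) ` S"
      proof
        fix L assume L: "L \<in> K (c t, ?m)"
        obtain q m' where qm: "L = (q, m')" by fastforce
        have "q \<in> {1..?m}" using L qm cle[of t] by (auto simp: K_def)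
        then have "q \<in> c ` S" using cimg by simp
        then obtain s where s: "s \<in> S" "c s = q" by (metis imageE)
        show "L \<in> (\<lambda>s. (c s, if t < s then Suc ?m else ?m)) ` S"
        proof (cases "t < s")
          case True
          then have "c t < q" using cstrict s by blast
          then have "L = (c s, if t < s then Suc ?m else ?m)" using L qm s True by (auto simp: K_def)
          then show ?thesis using s by blast
        next
          case False
          then have "q \<le> c t" using cmono s by (metis not_less)
          then have "L = (c s, if t < s then Suc ?m else ?m)" using L qm s False by (auto simp: K_def)
          then show ?thesis using s by blast
        qed
      qed
    qed
  qed
qed



definition insN :: "nat \<Rightarrow> nat \<Rightarrow> nat list \<Rightarrow> nat list" where
  "insN s N xs = take s xs @ N # drop s xs"

definition act :: "nat list \<Rightarrow> nat \<Rightarrow> bool" where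
  "act x s \<longleftrightarrow> s \<le> length x \<and> (s = 0 \<or> \<not> (\<exists>k. s \<le> k \<and> k < length x \<and> x!k + 1 = x!(s-1)))"

lemma length_insN[simp]: "s \<le> length xs \<Longrightarrow> length (insN s N xs) = Suc (length xs)"
  by (simp add: insN_def)

lemma nth_insN: "s \<le> length xs \<Longrightarrow>
  insN s N xs ! k = (if k < s then xs!k else if k = s then N else xs!(k-1))"
  by (auto simp: insN_def nth_append min_def nth_Cons' not_less)

lemma nth_insN_s[simp]: "s \<le> length xs \<Longrightarrow> insN s N xs ! s = N"
  by (simp add: nth_insN)

lemma f_ins:
  assumes s: "s \<le> length xs" and lt: "\<forall>c\<in>set xs. c < N"
  shows "contains_f (insN s N xs) \<longleftrightarrow> contains_f xs \<or> \<not> act xs s"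
proof -
  let ?p = "insN s N xs"
  have ltn: "\<And>k. k < length xs \<Longrightarrow> xs!k < N" using lt by auto
  have pn: "\<And>k. k < Suc (length xs) \<Longrightarrow> ?p!k \<le> N" using s ltn
    by (auto simp: nth_insN less_imp_le) 
  show ?thesis
  proof
    assume "contains_f ?p"
    then obtain i k where ik: "Suc i < k" "k < Suc (length xs)" "?p ! i < ?p ! Suc i" "?p ! k + 1 = ?p ! i"
      unfolding contains_f_def using s by auto
    have "i \<noteq> s"
    proof
      assume "i = s" then show False using ik pn[of "Suc i"] s by simp
    qed
    have "k \<noteq> s"
    proof
      assume "k = s" then show False using ik pn[of i] s by simp
    qed
    show "contains_f xs \<or> \<not> act xs s"
    proof (cases "Suc i = s")
      case True
      then have "\<not> act xs s" using ik s unfolding act_def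
        by (auto simp: nth_insN intro!: exI[of _ "k - 1"])
      then show ?thesis by blast
    next
      case False
      have "contains_f xs"
      proof (cases "s < i")
        case True
        show ?thesis unfolding contains_f_def by (rule exI[of _ "i - 1"], rule exI[of _ "k - 1"], insert ik s True) (auto simp: nth_insN)
      next
        case False
        then have si: "Suc i < s" using \<open>i \<noteq> s\<close> \<open>Suc i \<noteq> s\<close> by simp
        show ?thesis
        proof (cases "k < s")
          case True
          show ?thesis unfolding contains_f_def by (rule exI[of _ i], rule exI[of _ k], insert ik s si True) (auto simp: nth_insN)
        next
          case False
          show ?thesis unfolding contains_f_def by (rule exI[of _ i], rule exI[of _ "k - 1"], insert ik s si \<open>k \<noteq> s\<close> False) (auto simp: nth_insN)
        qed
      qed
      then show ?thesis by blast
    qed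
  next
    assume "contains_f xs \<or> \<not> act xs s"
    then show "contains_f ?p"
    proof
      assume "contains_f xs"
      then obtain i k where ik: "Suc i < k" "k < length xs" "xs ! i < xs ! Suc i" "xs ! k + 1 = xs ! i"
        unfolding contains_f_def by auto
      show ?thesis
      proof (cases "s \<le> i")
        case True
        show ?thesis unfolding contains_f_def by (rule exI[of _ "Suc i"], rule exI[of _ "Suc k"], insert ik s True) (auto simp: nth_insN)
      next
        case False
        show ?thesis
        proof (cases "s = Suc i")
          case True
          show ?thesis unfolding contains_f_def by (rule exI[of _ i], rule exI[of _ "Suc k"], insert ik s ltn[of i] True) (auto simp: nth_insN)
        next
          case False
          then have si: "Suc i < s" using \<open>\<not> s \<le> i\<close> by simp
          show ?thesis
          proof (cases "k < s")
            case True
            show ?thesis unfolding contains_f_def by (rule exI[of _ i], rule exI[of _ k], insert ik s si True) (auto simp: nth_insN)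
          next
            case False
            show ?thesis unfolding contains_f_def by (rule exI[of _ i], rule exI[of _ "Suc k"], insert ik s si False) (auto simp: nth_insN)
          qed
        qed
      qed
    next
      assume "\<not> act xs s"
      then obtain k where k: "0 < s" "s \<le> k" "k < length xs" "xs!k + 1 = xs!(s-1)"
        using s unfolding act_def by auto
      show ?thesis unfolding contains_f_def by (rule exI[of _ "s - 1"], rule exI[of _ "Suc k"], insert k s ltn[of "s - 1"]) (auto simp: nth_insN)
    qed
  qed
qed

lemma act_le: "act x s \<Longrightarrow> s \<le> length x" by (simp add: act_def)

lemma act_ins_le:
  assumes s: "s \<le> length xs" and lt: "\<forall>c\<in>set xs. c < N" and s': "s' \<le> s"
  shows "act (insN s N xs) s' \<longleftrightarrow> act xs s'"
proof (cases "s' = 0")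
  case True then show ?thesis using s by (simp add: act_def)
next
  case False
  have ltn: "\<And>k. k < length xs \<Longrightarrow> xs!k < N" using lt by auto
  let ?p = "insN s N xs"
  have e: "?p ! (s'-1) = xs ! (s'-1)" using s s' False by (simp add: nth_insN)
  have "(\<exists>k. s' \<le> k \<and> k < length ?p \<and> ?p!k + 1 = ?p!(s'-1)) \<longleftrightarrow>
        (\<exists>k. s' \<le> k \<and> k < length xs \<and> xs!k + 1 = xs!(s'-1))"
  proof
    assume "\<exists>k. s' \<le> k \<and> k < length ?p \<and> ?p!k + 1 = ?p!(s'-1)"
    then obtain k where k: "s' \<le> k" "k < Suc (length xs)" "?p!k + 1 = xs!(s'-1)" using e s by auto
    have x: "xs!(s'-1) < N" using ltn[of "s'-1"] s s' False by simp
    show "\<exists>k. s' \<le> k \<and> k < length xs \<and> xs!k + 1 = xs!(s'-1)"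
    proof (cases "k < s")
      case True then show ?thesis using k s by (auto simp: nth_insN)
    next
      case False
      then have "k \<noteq> s" using k x s by (auto simp: nth_insN)
      then show ?thesis using k s False s' by (auto simp: nth_insN intro!: exI[of _ "k - 1"])
    qed
  next
    assume "\<exists>k. s' \<le> k \<and> k < length xs \<and> xs!k + 1 = xs!(s'-1)"
    then obtain k where k: "s' \<le> k" "k < length xs" "xs!k + 1 = xs!(s'-1)" by auto
    show "\<exists>k. s' \<le> k \<and> k < length ?p \<and> ?p!k + 1 = ?p!(s'-1)"
    proof (cases "k < s")
      case True then show ?thesis using k s e by (auto simp: nth_insN intro!: exI[of _ k])
    next
      case False then show ?thesis using k s e by (auto simp: nth_insN intro!: exI[of _ "Suc k"])
    qed
  qed
  then show ?thesis using s s' False unfolding act_def by auto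
qed

lemma act_ins_at:
  assumes s: "s \<le> length xs"
  shows "act (insN s N xs) (Suc s) \<longleftrightarrow> \<not> (\<exists>k. s \<le> k \<and> k < length xs \<and> xs!k + 1 = N)"
proof -
  let ?p = "insN s N xs"
  have e: "?p ! s = N" using s by (simp add: nth_insN)
  have "(\<exists>k. Suc s \<le> k \<and> k < length ?p \<and> ?p!k + 1 = ?p!s) \<longleftrightarrow>
        (\<exists>k. s \<le> k \<and> k < length xs \<and> xs!k + 1 = N)"
  proof
    assume "\<exists>k. Suc s \<le> k \<and> k < length ?p \<and> ?p!k + 1 = ?p!s"
    then obtain k where k: "Suc s \<le> k" "k < Suc (length xs)" "?p!k + 1 = N" using e s by auto
    then show "\<exists>k. s \<le> k \<and> k < length xs \<and> xs!k + 1 = N"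
      using s by (auto simp: nth_insN intro!: exI[of _ "k - 1"])
  next
    assume "\<exists>k. s \<le> k \<and> k < length xs \<and> xs!k + 1 = N"
    then obtain k where k: "s \<le> k" "k < length xs" "xs!k + 1 = N" by auto
    then show "\<exists>k. Suc s \<le> k \<and> k < length ?p \<and> ?p!k + 1 = ?p!s"
      using s e by (auto simp: nth_insN intro!: exI[of _ "Suc k"])
  qed
  then show ?thesis using s unfolding act_def by auto
qed

lemma act_ins_gt:
  assumes s: "s \<le> length xs" and s': "s < s'"
  shows "act (insN s N xs) (Suc s') \<longleftrightarrow> act xs s'"
proof -
  let ?p = "insN s N xs"
  show ?thesis
  proof (cases "s' \<le> length xs")
    case False then show ?thesis using s by (simp add: act_def)
  next
    case True
    have e: "?p ! s' = xs ! (s'-1)" using s s' True by (simp add: nth_insN)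
    have "(\<exists>k. Suc s' \<le> k \<and> k < length ?p \<and> ?p!k + 1 = ?p!s') \<longleftrightarrow>
          (\<exists>k. s' \<le> k \<and> k < length xs \<and> xs!k + 1 = xs!(s'-1))"
    proof
      assume "\<exists>k. Suc s' \<le> k \<and> k < length ?p \<and> ?p!k + 1 = ?p!s'"
      then obtain k where k: "Suc s' \<le> k" "k < Suc (length xs)" "?p!k + 1 = xs!(s'-1)" using e s by auto
      then show "\<exists>k. s' \<le> k \<and> k < length xs \<and> xs!k + 1 = xs!(s'-1)"
        using s s' by (auto simp: nth_insN intro!: exI[of _ "k - 1"])
    next
      assume "\<exists>k. s' \<le> k \<and> k < length xs \<and> xs!k + 1 = xs!(s'-1)"
      then obtain k where k: "s' \<le> k" "k < length xs" "xs!k + 1 = xs!(s'-1)" by auto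
      then show "\<exists>k. Suc s' \<le> k \<and> k < length ?p \<and> ?p!k + 1 = ?p!s'"
        using s s' e by (auto simp: nth_insN intro!: exI[of _ "Suc k"])
    qed
    then show ?thesis using s s' True unfolding act_def by auto
  qed
qed

lemma fin_act: "finite {s. act x s}"
  by (rule finite_subset[of _ "{..length x}"]) (auto simp: act_def)

lemma card_act_ins:
  assumes s: "s \<le> length xs" and lt: "\<forall>c\<in>set xs. c < N"
  shows "card {s'. act (insN s N xs) s'} = card {s'. act xs s'} +
     (if (\<exists>k. s \<le> k \<and> k < length xs \<and> xs!k + 1 = N) then 0 else 1)"
proof -
  define P where "P = (\<not> (\<exists>k. s \<le> k \<and> k < length xs \<and> xs!k + 1 = N))"
  define L where "L = {s'. s' \<le> s \<and> act xs s'}"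
  define R where "R = {s'. s < s' \<and> act xs s'}"
  define E where "E = {x. x = Suc s \<and> P}"
  have eq: "{s'. act (insN s N xs) s'} = L \<union> (E \<union> Suc ` R)"
  proof (rule set_eqI)
    fix x
    show "x \<in> {s'. act (insN s N xs) s'} \<longleftrightarrow> x \<in> L \<union> (E \<union> Suc ` R)"
    proof (cases "x \<le> s")
      case True
      have "x \<notin> E" "x \<notin> Suc ` R" using True unfolding E_def R_def by auto
      moreover have "x \<in> L \<longleftrightarrow> act xs x" using True unfolding L_def by simp
      ultimately show ?thesis using act_ins_le[OF s lt True] by blast
    next
      case False
      define y where "y = x - 1"
      have y: "x = Suc y" "s \<le> y" using False y_def by auto
      have xL: "x \<notin> L" using False unfolding L_def by simp
      show ?thesis
      proof (cases "y = s")
        case True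
        have "x \<notin> Suc ` R" using y True unfolding R_def by auto
        moreover have "x \<in> E \<longleftrightarrow> P" using y True unfolding E_def by simp
        ultimately show ?thesis using y True act_ins_at[OF s, of N] xL unfolding P_def by blast
      next
        case False
        then have sy: "s < y" using y by simp
        have "x \<notin> E" using y False unfolding E_def by simp
        moreover have "x \<in> Suc ` R \<longleftrightarrow> act xs y" using y sy unfolding R_def by auto
        ultimately show ?thesis using y act_ins_gt[OF s sy, of N] xL by blast
      qed
    qed
  qed
  have fL: "finite L" unfolding L_def by (rule finite_subset[OF _ fin_act[of xs]]) blast
  have fR: "finite R" unfolding R_def by (rule finite_subset[OF _ fin_act[of xs]]) blast
  have fE: "finite E" unfolding E_def by simp
  have d1: "L \<inter> (E \<union> Suc ` R) = {}" unfolding L_def E_def R_def by auto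
  have d2: "E \<inter> Suc ` R = {}" unfolding E_def R_def by auto
  have c1: "card (E \<union> Suc ` R) = card E + card (Suc ` R)"
    using fR fE d2 by (intro card_Un_disjoint) auto
  have c2: "card (L \<union> (E \<union> Suc ` R)) = card L + card (E \<union> Suc ` R)"
    using fL fR fE d1 by (intro card_Un_disjoint) auto
  have c3: "card (Suc ` R) = card R" by (simp add: card_image)
  have c4: "{s'. act xs s'} = L \<union> R" unfolding L_def R_def by auto
  have c5: "card (L \<union> R) = card L + card R" using fL fR
    by (intro card_Un_disjoint) (auto simp: L_def R_def)
  have c6: "card E = (if P then 1 else 0)" unfolding E_def by auto
  show ?thesis unfolding eq c2 c1 c3 c4 c5 c6 P_def by simp
qed



definition labB :: "nat list \<Rightarrow> nat \<times> nat" where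
  "labB x = (card {s. act x s \<and> (\<forall>j<s. x!j \<noteq> length x)}, card {s. act x s})"
definition parB :: "nat list \<Rightarrow> nat list" where
  "parB x = removeAll (length x) x"
definition Bf :: "nat \<Rightarrow> nat list set" where
  "Bf n = {x. is_cay x \<and> length x = n \<and> distinct x \<and> \<not> contains_f x}"

lemma Bset: "is_cay x \<Longrightarrow> distinct x \<Longrightarrow> set x = {1..length x}"
  using cay_card[of x] distinct_card[of x] by (simp add: is_cay_def)

lemma B_lt: "x \<in> Bf n \<Longrightarrow> \<forall>c\<in>set x. c < Suc n"
  using Bset[of x] by (auto simp: Bf_def)

lemma set_insN: "set (insN s N xs) = insert N (set xs)"
proof -
  have "set (insN s N xs) = insert N (set (take s xs) \<union> set (drop s xs))" by (simp add: insN_def)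
  also have "set (take s xs) \<union> set (drop s xs) = set xs"
    by (metis append_take_drop_id set_append)
  finally show ?thesis .
qed

lemma cay_from_set: "set x = {1..length x} \<Longrightarrow> is_cay x \<and> distinct x"
proof -
  assume h: "set x = {1..length x}"
  then have "is_cay x" using maxl_of_set[OF h] by (simp add: is_cay_def)
  moreover have "distinct x" using h by (simp add: card_distinct)
  ultimately show ?thesis by blast
qed

lemma insN_in_B:
  assumes xs: "xs \<in> Bf n" and a: "act xs s"
  shows "insN s (Suc n) xs \<in> Bf (Suc n) \<and> parB (insN s (Suc n) xs) = xs"
proof -
  have s: "s \<le> length xs" using a by (rule act_le)
  have ln: "length xs = n" using xs by (simp add: Bf_def)
  have sx: "set xs = {1..n}" using xs Bset[of xs] by (simp add: Bf_def)
  have "set (insN s (Suc n) xs) = {1..Suc n}" using sx by (auto simp: set_insN)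
  then have cd: "is_cay (insN s (Suc n) xs) \<and> distinct (insN s (Suc n) xs)"
    using cay_from_set[of "insN s (Suc n) xs"] s ln by simp
  have "\<not> contains_f (insN s (Suc n) xs)" using f_ins[OF s B_lt[OF xs]] a xs by (simp add: Bf_def)
  moreover have "parB (insN s (Suc n) xs) = xs"
  proof -
    have nin: "Suc n \<notin> set xs" using sx by auto
    then have "Suc n \<notin> set (take s xs)" "Suc n \<notin> set (drop s xs)"
      by (meson in_set_takeD in_set_dropD)+
    then show ?thesis using s ln by (simp add: parB_def insN_def)
  qed
  ultimately show ?thesis using cd s ln by (simp add: Bf_def)
qed

lemma split_B:
  assumes p: "p \<in> Bf (Suc n)"
  obtains u w where "p = u @ Suc n # w" "parB p = u @ w" "Suc n \<notin> set u" "Suc n \<notin> set w"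
proof -
  have sp: "set p = {1..Suc n}" and lp: "length p = Suc n" and dp: "distinct p"
    using p Bset[of p] by (auto simp: Bf_def)
  then have "Suc n \<in> set p" by simp
  then obtain u w where e: "p = u @ Suc n # w" by (meson split_list)
  then have "Suc n \<notin> set u" "Suc n \<notin> set w" using dp by auto
  moreover have "parB p = u @ w" using e lp calculation by (simp add: parB_def)
  ultimately show ?thesis using e that by blast
qed

lemma parB_in:
  assumes p: "p \<in> Bf (Suc n)"
  shows "parB p \<in> Bf n \<and> (\<exists>s. act (parB p) s \<and> p = insN s (Suc n) (parB p))"
proof -
  obtain u w where uw: "p = u @ Suc n # w" "parB p = u @ w" "Suc n \<notin> set u" "Suc n \<notin> set w"
    using split_B[OF p] by blast
  have sp: "set p = {1..Suc n}" and lp: "length p = Suc n" and dp: "distinct p"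
    and nf: "\<not> contains_f p" using p Bset[of p] by (auto simp: Bf_def)
  let ?x = "u @ w"
  have "set ?x = set p - {Suc n}" using uw by auto
  also have "\<dots> = {1..n}" unfolding sp by auto
  finally have sx: "set ?x = {1..n}" .
  have lx: "length ?x = n" using lp uw by simp
  have cx: "is_cay ?x \<and> distinct ?x" using cay_from_set[of ?x] sx lx by simp
  have ins: "p = insN (length u) (Suc n) ?x" using uw by (simp add: insN_def)
  have lt: "\<forall>c\<in>set ?x. c < Suc n" using sx by auto
  have "\<not> (contains_f ?x \<or> \<not> act ?x (length u))"
    using f_ins[of "length u" ?x "Suc n"] lt nf ins by simp
  then show ?thesis using cx lx ins uw(2) by (auto simp: Bf_def)
qed

lemma insN_inj:
  assumes "s1 \<le> length xs" "s2 \<le> length xs" "N \<notin> set xs" "insN s1 N xs = insN s2 N xs"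
  shows "s1 = s2"
proof (rule ccontr)
  assume ne: "s1 \<noteq> s2"
  { fix a b assume ab: "a < b" "a \<le> length xs" "b \<le> length xs" "insN a N xs = insN b N xs"
    have e1: "insN a N xs ! a = N" using ab(2) by (rule nth_insN_s)
    have e2: "insN b N xs ! a = xs ! a" using ab(1,3) by (simp add: nth_insN)
    have "xs ! a \<in> set xs" using ab by simp
    moreover have "xs ! a = N" using e1 e2 ab(4) by simp
    ultimately have False using assms(3) by simp }
  then show False using ne assms by (metis linorder_neqE_nat)
qed

lemma lab_ins:
  assumes xs: "xs \<in> Bf n" and n: "n \<ge> 1" and a: "act xs s" and t: "t < n" "xs ! t = n"
  defines "c \<equiv> (\<lambda>s. card {s' \<in> {s. act xs s}. s' \<le> s})"
  shows "labB (insN s (Suc n) xs) = (c s, if t < s then Suc (card {s. act xs s}) else card {s. act xs s})"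
    and "labB xs = (c t, card {s. act xs s})"
proof -
  have s: "s \<le> length xs" using a by (rule act_le)
  have ln: "length xs = n" using xs by (simp add: Bf_def)
  have dx: "distinct xs" using xs by (simp add: Bf_def)
  have lt: "\<forall>c\<in>set xs. c < Suc n" using B_lt[OF xs] .
  let ?p = "insN s (Suc n) xs"
  have nin: "Suc n \<notin> set xs" using lt by auto
  have "{s'. act ?p s' \<and> (\<forall>j<s'. ?p!j \<noteq> length ?p)} = {s' \<in> {s. act xs s}. s' \<le> s}"
  proof (rule set_eqI)
    fix x
    show "x \<in> {s'. act ?p s' \<and> (\<forall>j<s'. ?p!j \<noteq> length ?p)} \<longleftrightarrow> x \<in> {s' \<in> {s. act xs s}. s' \<le> s}"
    proof (cases "x \<le> s")
      case True
      have "\<forall>j<x. ?p!j \<noteq> length ?p"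
      proof (intro allI impI)
        fix j assume "j < x"
        then have "?p ! j = xs ! j" "j < length xs" using True s by (auto simp: nth_insN)
        moreover have "xs ! j \<in> set xs" using \<open>j < length xs\<close> by (rule nth_mem)
        moreover have "length ?p = Suc n" using s ln by simp
        ultimately show "?p!j \<noteq> length ?p" using nin by metis
      qed
      then show ?thesis using True act_ins_le[OF s lt True] by auto
    next
      case False
      have "?p ! s = length ?p" using s ln by (simp add: nth_insN)
      moreover have "s < x" using False by simp
      ultimately have "\<exists>j<x. ?p!j = length ?p" by blast
      then show ?thesis using False by auto
    qed
  qed
  moreover have "card {s'. act ?p s'} = card {s. act xs s} + (if t < s then 1 else 0)"
  proof -
    have "(\<exists>k. s \<le> k \<and> k < length xs \<and> xs!k + 1 = Suc n) \<longleftrightarrow> s \<le> t"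
    proof
      assume "\<exists>k. s \<le> k \<and> k < length xs \<and> xs!k + 1 = Suc n"
      then obtain k where k: "s \<le> k" "k < length xs" "xs!k = n" by auto
      then have "k = t" using t dx ln nth_eq_iff_index_eq by metis
      then show "s \<le> t" using k by simp
    next
      assume "s \<le> t" then show "\<exists>k. s \<le> k \<and> k < length xs \<and> xs!k + 1 = Suc n"
        using t ln by auto
    qed
    then show ?thesis using card_act_ins[OF s lt] by auto
  qed
  ultimately show "labB ?p = (c s, if t < s then Suc (card {s. act xs s}) else card {s. act xs s})"
    unfolding labB_def c_def by simp
  have "{s'. act xs s' \<and> (\<forall>j<s'. xs!j \<noteq> length xs)} = {s' \<in> {s. act xs s}. s' \<le> t}"
  proof (rule set_eqI)
    fix x
    show "x \<in> {s'. act xs s' \<and> (\<forall>j<s'. xs!j \<noteq> length xs)} \<longleftrightarrow> x \<in> {s' \<in> {s. act xs s}. s' \<le> t}"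
    proof (cases "act xs x")
      case True
      then have xl: "x \<le> length xs" by (rule act_le)
      have "(\<forall>j<x. xs!j \<noteq> n) \<longleftrightarrow> x \<le> t"
      proof
        assume "\<forall>j<x. xs!j \<noteq> n" then show "x \<le> t" using t by (metis not_le)
      next
        assume "x \<le> t"
        show "\<forall>j<x. xs!j \<noteq> n"
        proof (intro allI impI)
          fix j assume "j < x"
          then have "j < length xs" "j \<noteq> t" using xl \<open>x \<le> t\<close> by auto
          then show "xs!j \<noteq> n" using t dx ln nth_eq_iff_index_eq by metis
        qed
      qed
      then show ?thesis using True ln by auto
    qed auto
  qed
  then show "labB xs = (c t, card {s. act xs s})" unfolding labB_def c_def by simp
qed

lemma fiber_bij_B:
  assumes n: "n \<ge> 1" and xs: "xs \<in> Bf n"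
  shows "bij_betw labB {p \<in> Bf (Suc n). parB p = xs} (K (labB xs))"
proof -
  let ?S = "{s. act xs s}"
  let ?F = "{p \<in> Bf (Suc n). parB p = xs}"
  let ?g = "\<lambda>s. insN s (Suc n) xs"
  have ln: "length xs = n" using xs by (simp add: Bf_def)
  have sx: "set xs = {1..n}" using xs Bset[of xs] by (simp add: Bf_def)
  then obtain t where t: "t < n" "xs ! t = n" using n ln by (metis atLeastAtMost_iff in_set_conv_nth order_refl)
  have nin: "Suc n \<notin> set xs" using sx by auto
  have g: "bij_betw ?g ?S ?F" unfolding bij_betw_def
  proof
    show "inj_on ?g ?S"
    proof (rule inj_onI)
      fix x y assume "x \<in> ?S" "y \<in> ?S" and e: "?g x = ?g y"
      then have "act xs x" "act xs y" by auto
      then show "x = y" using insN_inj[OF act_le act_le nin e] by blast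
    qed
    show "?g ` ?S = ?F"
    proof
      show "?g ` ?S \<subseteq> ?F" using insN_in_B[OF xs] by auto
      show "?F \<subseteq> ?g ` ?S"
      proof
        fix p assume "p \<in> ?F"
        then show "p \<in> ?g ` ?S" using parB_in[of p n] by auto
      qed
    qed
  qed
  define c where "c = (\<lambda>s. card {s' \<in> ?S. s' \<le> s})"
  have "bij_betw (\<lambda>s. (c s, if t < s then Suc (card ?S) else card ?S)) ?S (K (c t, card ?S))"
    unfolding c_def by (rule rank_bij[OF fin_act])
  moreover have "\<And>s. s \<in> ?S \<Longrightarrow> (labB \<circ> ?g) s = (c s, if t < s then Suc (card ?S) else card ?S)"
    using lab_ins(1)[OF xs n _ t] unfolding c_def by simp
  moreover have "labB xs = (c t, card ?S)"
  proof -
    have a0: "act xs 0" by (simp add: act_def)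
    show ?thesis using lab_ins(2)[OF xs n a0 t] unfolding c_def by simp
  qed
  ultimately have "bij_betw (labB \<circ> ?g) ?S (K (labB xs))"
    by (metis (no_types, lifting) bij_betw_cong)
  then show ?thesis using bij_betw_comp_iff[OF g] by blast
qed



definition labA :: "nat list \<Rightarrow> nat \<times> nat" where
  "labA x = (last x, asc x + 2)"
definition parA :: "nat list \<Rightarrow> nat list" where
  "parA x = (if last x \<in> set (butlast x) then butlast x else map (decf (last x)) (butlast x))"
definition childA :: "nat list \<Rightarrow> nat \<Rightarrow> nat list" where
  "childA v q = (if q \<le> last v then v @ [q] else map (incf q) v @ [q])"
definition Af :: "nat \<Rightarrow> nat list set" where
  "Af n = {x. modasc x \<and> length x = n}"

lemma parA_props:
  assumes n: "n \<ge> 1" and x: "x \<in> Af (Suc n)"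
  shows "parA x \<in> Af n \<and> x = childA (parA x) (last x) \<and> labA x \<in> K (labA (parA x))"
proof -
  have mx: "modasc x" and lx: "length x = Suc n" using x by (auto simp: Af_def)
  obtain v a where xv: "x = v @ [a]" using lx by (cases x rule: rev_cases) auto
  have ne: "v \<noteq> []" using xv lx n by auto
  have cg: "is_cay (v@[a])" "good (v@[a])" using modasc_imp[OF mx] xv by auto
  define w where "w = (if a \<in> set v then v else map (decf a) v)"
  have P: "is_cay w \<and> good w \<and> length w = length v \<and>
         (a \<in> set v \<longrightarrow> 1 \<le> a \<and> a \<le> last v) \<and>
         (a \<notin> set v \<longrightarrow> last w < a \<and> a \<le> 2 + asc w \<and> map (incf a) w = v)"
    using parent_props[OF cg ne] unfolding w_def by blast
  have pw: "parA x = w" using xv unfolding parA_def w_def by simp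
  have wA: "w \<in> Af n" using P imp_modasc[of w] xv lx by (simp add: Af_def)
  have gs: "last v < a \<longleftrightarrow> a \<notin> set v" using cg(2) ne good_snoc by blast
  show ?thesis
  proof (cases "a \<in> set v")
    case True
    have wv: "w = v" using True w_def by simp
    have a: "1 \<le> a" "a \<le> last v" using P True by auto
    have "childA w a = x" using wv a xv by (simp add: childA_def)
    moreover have "labA x = (a, asc v + 2)" using xv a ne by (simp add: labA_def asc_snoc)
    ultimately show ?thesis using pw wA wv a xv by (auto simp: labA_def K_def)
  next
    case False
    have q: "last w < a" "a \<le> 2 + asc w" "map (incf a) w = v" using P False by blast+
    have "childA w a = x" using q xv by (simp add: childA_def)
    moreover have "asc v = asc w" using q(3) asc_map[of w "incf a"] incf_mono by metis
    moreover have "labA x = (a, asc v + 3)" using xv ne gs False by (simp add: labA_def asc_snoc)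
    ultimately show ?thesis using pw wA q xv by (auto simp: labA_def K_def)
  qed
qed

lemma childA_props:
  assumes n: "n \<ge> 1" and v: "v \<in> Af n" and L: "L \<in> K (labA v)"
  shows "childA v (fst L) \<in> Af (Suc n) \<and> parA (childA v (fst L)) = v \<and> labA (childA v (fst L)) = L"
proof -
  have mv: "modasc v" and lv: "length v = n" using v by (auto simp: Af_def)
  have ne: "v \<noteq> []" using lv n by auto
  have cv: "is_cay v" using modasc_imp[OF mv] by blast
  obtain q m where Lq: "L = (q, m)" by fastforce
  show ?thesis
  proof (cases "q \<le> last v")
    case True
    have qm: "1 \<le> q" "m = asc v + 2" using L Lq True by (auto simp: K_def labA_def)
    have ch: "childA v q = v @ [q]" using True by (simp add: childA_def)
    have "modasc (v @ [q])" using modasc.app_le[OF mv ne qm(1) True] .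
    moreover have "q \<in> set v"
    proof -
      have "last v \<in> set v" using ne by simp
      then have "last v \<le> maxl v" using cay_maxl_ge[OF cv] by blast
      then show ?thesis using cay_in[OF cv qm(1)] True by simp
    qed
    moreover have "labA (v @ [q]) = (q, asc v + 2)" using True ne by (simp add: labA_def asc_snoc)
    ultimately show ?thesis using ch Lq qm lv by (simp add: Af_def parA_def)
  next
    case False
    have qm: "q \<le> asc v + 2" "m = Suc (asc v + 2)" using L Lq False by (auto simp: K_def labA_def)
    have ch: "childA v q = map (incf q) v @ [q]" using False by (simp add: childA_def)
    have lt: "last v < q" using False by simp
    have "modasc (map (\<lambda>c. if q \<le> c then c + 1 else c) v @ [q])"
      using modasc.app_gt[OF mv ne lt] qm(1) by simp
    then have m1: "modasc (map (incf q) v @ [q])" by (simp only: incf_lam)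
    have nin: "q \<notin> set (map (incf q) v)" by (auto simp: incf_def)
    have dd: "map (decf q) (map (incf q) v) = v" by (induction v) (auto simp: incf_def decf_def)
    have as: "asc (map (incf q) v) = asc v" using asc_map[of v "incf q"] incf_mono by metis
    have lm: "last (map (incf q) v) = last v" using ne lt by (simp add: last_map incf_def)
    have "labA (map (incf q) v @ [q]) = (q, asc v + 3)"
      using ne lt as lm by (simp add: labA_def asc_snoc)
    then show ?thesis using ch Lq qm lv m1 nin dd by (simp add: Af_def parA_def)
  qed
qed

lemma fiber_bij_A:
  assumes n: "n \<ge> 1" and v: "v \<in> Af n"
  shows "bij_betw labA {x \<in> Af (Suc n). parA x = v} (K (labA v))"
  unfolding bij_betw_def
proof
  show "inj_on labA {x \<in> Af (Suc n). parA x = v}"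
  proof (rule inj_onI)
    fix x y assume x: "x \<in> {x \<in> Af (Suc n). parA x = v}" and y: "y \<in> {x \<in> Af (Suc n). parA x = v}"
      and e: "labA x = labA y"
    have "last x = last y" using e by (simp add: labA_def)
    moreover have "x = childA v (last x)" using parA_props[OF n] x by auto
    moreover have "y = childA v (last y)" using parA_props[OF n] y by auto
    ultimately show "x = y" by simp
  qed
  show "labA ` {x \<in> Af (Suc n). parA x = v} = K (labA v)"
  proof
    show "labA ` {x \<in> Af (Suc n). parA x = v} \<subseteq> K (labA v)"
      using parA_props[OF n] by auto
    show "K (labA v) \<subseteq> labA ` {x \<in> Af (Suc n). parA x = v}"
    proof
      fix L assume "L \<in> K (labA v)"
      then have "childA v (fst L) \<in> {x \<in> Af (Suc n). parA x = v}" "labA (childA v (fst L)) = L"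
        using childA_props[OF n v] by auto
      then show "L \<in> labA ` {x \<in> Af (Suc n). parA x = v}" by force
    qed
  qed
qed

lemma cay_len: "is_cay x \<Longrightarrow> set x \<subseteq> {0..length x}"
proof -
  assume c: "is_cay x"
  have "maxl x = card (set x)" using cay_card[OF c] by simp
  also have "\<dots> \<le> length x" by (rule card_length)
  finally show ?thesis using c by (auto simp: is_cay_def)
qed

lemma fin_lists: "finite {x. is_cay x \<and> length x = n}"
proof (rule finite_subset)
  show "{x. is_cay x \<and> length x = n} \<subseteq> {x. set x \<subseteq> {0..n} \<and> length x = n}"
    using cay_len by auto
  show "finite {x. set x \<subseteq> {0..n} \<and> length x = n}" by (rule finite_lists_length_eq) simp
qed

lemma finA: "finite (Af n)"
  by (rule finite_subset[OF _ fin_lists[of n]]) (auto simp: Af_def dest: modasc_imp)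

lemma finB: "finite (Bf n)"
  by (rule finite_subset[OF _ fin_lists[of n]]) (auto simp: Bf_def)

lemma single_cay: "is_cay [a] \<Longrightarrow> a = 1"
proof -
  assume "is_cay [a]"
  then have e: "{a} = {1..a}" by (simp add: is_cay_def maxl_def)
  then have "a \<in> {1..a}" by blast
  then have "1 \<in> {1..a}" by simp
  then have "1 \<in> {a}" by (simp only: e)
  then show "a = 1" by simp
qed

lemma cay_one: "is_cay [1]" by (simp add: is_cay_def maxl_def)

lemma Af1: "Af 1 = {[1]}"
proof
  show "Af 1 \<subseteq> {[1]}"
  proof
    fix x assume "x \<in> Af 1"
    then have "modasc x" "length x = 1" by (auto simp: Af_def)
    then obtain a where "x = [a]" "is_cay [a]" using modasc_imp by (metis length_0_conv length_Suc_conv One_nat_def)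
    then show "x \<in> {[1]}" using single_cay by simp
  qed
  show "{[1]} \<subseteq> Af 1" using modasc.one by (simp add: Af_def)
qed

lemma Bf1: "Bf 1 = {[1]}"
proof
  show "Bf 1 \<subseteq> {[1]}"
  proof
    fix x assume "x \<in> Bf 1"
    then have "is_cay x" "length x = 1" by (auto simp: Bf_def)
    then obtain a where "x = [a]" "is_cay [a]" by (metis length_0_conv length_Suc_conv One_nat_def)
    then show "x \<in> {[1]}" using single_cay by simp
  qed
  show "{[1]} \<subseteq> Bf 1" using cay_one by (simp add: Bf_def contains_f_def)
qed

lemma lab1: "labA [1] = labB [1]"
proof -
  have a: "\<And>s. act [1] s \<longleftrightarrow> s \<le> 1" by (auto simp: act_def)
  have "{s. act [1] s \<and> (\<forall>j<s. [1]!j \<noteq> length [1::nat])} = {0}"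
  proof (rule set_eqI)
    fix s show "s \<in> {s. act [1] s \<and> (\<forall>j<s. [1]!j \<noteq> length [1::nat])} \<longleftrightarrow> s \<in> {0}"
      using a by (cases s) auto
  qed
  moreover have "{s. act [1] s} = {..1}"
  proof (rule set_eqI)
    fix s show "s \<in> {s. act [1] s} \<longleftrightarrow> s \<in> {..1}" using a[of s] by simp
  qed
  moreover have "asc [1] = 0" by (simp add: asc_def)
  moreover have "card {..1::nat} = 2" by simp
  ultimately show ?thesis by (simp add: labA_def labB_def)
qed

lemma modasc_iff: "modasc x \<longleftrightarrow> is_cay x \<and> \<not> contains_a x \<and> \<not> contains_b x"
  using modasc_imp imp_modasc good_iff by blast

theorem theorem7p3:
  shows "{x. modasc x} = {x. is_cay x \<and> \<not> contains_a x \<and> \<not> contains_b x}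
    \<and> (\<forall>n. card {x. is_cay x \<and> length x = n \<and> \<not> contains_a x \<and> \<not> contains_b x}
             = card {x. is_cay x \<and> length x = n \<and> distinct x \<and> \<not> contains_f x})"
proof
  show p1: "{x. modasc x} = {x. is_cay x \<and> \<not> contains_a x \<and> \<not> contains_b x}" by (rule part1)
  show "\<forall>n. card {x. is_cay x \<and> length x = n \<and> \<not> contains_a x \<and> \<not> contains_b x}
             = card {x. is_cay x \<and> length x = n \<and> distinct x \<and> \<not> contains_f x}"
  proof
    fix n
    have eA: "{x. is_cay x \<and> length x = n \<and> \<not> contains_a x \<and> \<not> contains_b x} = Af n"
      unfolding Af_def modasc_iff by blast
    have eB: "{x. is_cay x \<and> length x = n \<and> distinct x \<and> \<not> contains_f x} = Bf n"
      unfolding Bf_def by blast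
    have "card (Af n) = card (Bf n)"
    proof (cases "n = 0")
      case True
      have "Af n = {[]}" using True modasc.empty by (auto simp: Af_def)
      moreover have "Bf n = {[]}" using True by (auto simp: Bf_def contains_f_def is_cay_def maxl_def)
      ultimately show ?thesis by simp
    next
      case False
      show ?thesis
      proof (rule same_count[where labA = labA and labB = labB])
        show "\<And>n. finite (Af n)" by (rule finA)
        show "\<And>n. finite (Bf n)" by (rule finB)
        show "card {x \<in> Af (Suc n). labA x = L} = card {y \<in> Af n. L \<in> K (labA y)}"
          if n1: "n \<ge> 1" for n L
          by (rule tree_step[where par = parA]) (use parA_props[OF n1] fiber_bij_A[OF n1] in auto)
        show "card {x \<in> Bf (Suc n). labB x = L} = card {y \<in> Bf n. L \<in> K (labB y)}"
          if n1: "n \<ge> 1" for n L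
          by (rule tree_step[where par = parB]) (use parB_in fiber_bij_B[OF n1] in auto)
        show "card {x \<in> Af 1. labA x = L} = card {x \<in> Bf 1. labB x = L}" for L
        proof -
          have "{x \<in> {[1::nat]}. labA x = L} = {x \<in> {[1]}. labB x = L}" using lab1 by auto
          then show ?thesis unfolding Af1 Bf1 by (rule arg_cong[where f = card])
        qed
        show "n \<ge> 1" using False by simp
      qed
    qed
    then show "card {x. is_cay x \<and> length x = n \<and> \<not> contains_a x \<and> \<not> contains_b x}
             = card {x. is_cay x \<and> length x = n \<and> distinct x \<and> \<not> contains_f x}"
      using eA eB by simp
  qed
qed

end
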